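(* Let $p$ be an odd prime and $\alpha>1$ any integer with $\gcd(p,\alpha)=1$. Then for all positive integers $a$, $$S_p^1(a)\leq 4\, a^{\log_p\left(\frac{p+1}{2}\right)} .$$
   Context: A base-$p$ digit $d\in\{0,\dots,p-1\}$ is called small if $d<p/2$ and large otherwise. For integers $a,n\ge1$, $S_p^n(a)=\#\{0\le s<a : \text{the base-}p\text{ representation of }\alpha^s\text{ contains fewer than } n \text{ large digits}\}$ (this depends on the fixed $\alpha$). *)

theory Defs
  imports Complex_Main "HOL-Computational_Algebra.Primes"
begin

fun digits_base :: "nat \<Rightarrow> nat \<Rightarrow> nat list" where
  "digits_base p n = (if p < 2 \<or> n = 0 then [] else n mod p # digits_base p (n div p))"

definition large_digit :: "nat \<Rightarrow> nat \<Rightarrow> bool" where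
  "large_digit p d \<longleftrightarrow> real d \<ge> real p / 2"

definition num_large_digits :: "nat \<Rightarrow> nat \<Rightarrow> nat" where
  "num_large_digits p n = length (filter (large_digit p) (digits_base p n))"

definition S :: "nat \<Rightarrow> nat \<Rightarrow> nat \<Rightarrow> nat \<Rightarrow> nat" where
  "S alpha p n a = card {s. s < a \<and> num_large_digits p (alpha ^ s) < n}"

end

theory Submission
  imports Defs "HOL-Analysis.Analysis" "HOL-Number_Theory.Number_Theory"
begin


lemma chord:
  fixes p t :: real
  assumes p3: "p \<ge> 3" and t1: "1 \<le> t" and tp: "t \<le> p"
  shows "t + 1 \<le> 2 * t powr (log p ((p + 1) / 2))"
proof -
  define q where "q = (p + 1) / 2"
  define th where "th = log p q"
  define r where "r = log q p"
  have q1: "q > 1" "q \<le> p" using p3 by (auto simp: q_def)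
  have thr: "th * r = 1" unfolding th_def r_def log_def using q1 p3 by auto
  have r1: "r \<ge> 1" unfolding r_def using q1 by simp
  have th0: "th > 0" unfolding th_def using q1 p3 by simp
  have cv: "convex_on {1..q} (\<lambda>x. x powr r)"
    by (rule convex_on_subset[OF powr_convex[OF r1]]) auto
  define u where "u = t powr th"
  have u1: "1 \<le> u" unfolding u_def using t1 th0 by (simp add: ge_one_powr_ge_zero)
  have "u \<le> p powr th" unfolding u_def using t1 tp th0 by (intro powr_mono2) auto
  also have "p powr th = q" unfolding th_def using q1 p3 by simp
  finally have uq: "u \<le> q" .
  have ur: "u powr r = t" unfolding u_def using t1 by (simp add: powr_powr thr)
  have qr: "q powr r = p" unfolding r_def using q1 p3 by simp
  have "u powr r \<le> (q powr r - 1 powr r) / (q - 1) * (u - 1) + 1 powr r"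
    using convex_onD_Icc'[OF cv, of u] u1 uq by simp
  hence "t \<le> (p - 1) / (q - 1) * (u - 1) + 1" using ur qr by simp
  also have "(p - 1) / (q - 1) = 2" using q1 by (simp add: q_def field_simps)
  finally show ?thesis unfolding u_def th_def q_def by simp
qed

lemma lift:
  fixes x p k :: nat
  assumes "k \<ge> 1" "[x = 1] (mod p ^ k)"
  shows "[x ^ p = 1] (mod p ^ Suc k)"
proof -
  have d: "int (p ^ k) dvd int x - 1" using assms(2)
    by (metis cong_int_iff cong_iff_dvd_diff of_nat_1)
  have "[int x = 1] (mod int p)"
  proof -
    have "int p dvd int (p^k)" using assms(1) by (simp add: dvd_power)
    thus ?thesis using d by (metis cong_iff_dvd_diff dvd_trans)
  qed
  hence "[(\<Sum>i<p. int x ^ i) = (\<Sum>i<p. 1)] (mod int p)"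
    by (intro cong_sum) (metis cong_pow power_one)
  moreover have "[int p = 0] (mod int p)" by (simp add: cong_0_iff)
  ultimately have "[(\<Sum>i<p. int x ^ i) = 0] (mod int p)" using cong_trans by simp
  hence "int p dvd (\<Sum>i<p. int x ^ i)" by (simp add: cong_0_iff)
  hence "int (p ^ k) * int p dvd (int x - 1) * (\<Sum>i<p. int x ^ i)"
    using d by (simp add: mult_dvd_mono)
  hence "int (p ^ Suc k) dvd int x ^ p - 1"
    by (simp add: power_diff_1_eq mult.commute)
  thus ?thesis
    by (metis cong_int_iff cong_iff_dvd_diff of_nat_1 of_nat_power)
qed


declare digits_base.simps[simp del]

definition sm :: "nat \<Rightarrow> nat \<Rightarrow> nat \<Rightarrow> bool" where
  "sm p k x \<longleftrightarrow> (\<forall>i<k. 2 * (x div p ^ i mod p) < p)"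

lemma digits_small:
  assumes "p \<ge> 2" "num_large_digits p n = 0"
  shows "2 * (n div p ^ i mod p) < p"
  using assms
proof (induction p n arbitrary: i rule: digits_base.induct)
  case (1 p n)
  show ?case
  proof (cases "n = 0")
    case True thus ?thesis using 1 by simp
  next
    case False
    hence dn: "digits_base p n = n mod p # digits_base p (n div p)"
      using 1(2) by (subst digits_base.simps) simp
    have h1: "\<not> large_digit p (n mod p)" and h2: "num_large_digits p (n div p) = 0"
      using 1(3) unfolding num_large_digits_def dn by (auto split: if_splits)
    show ?thesis
    proof (cases i)
      case 0 thus ?thesis using h1 by (simp add: large_digit_def)
    next
      case (Suc i')
      have "n div p ^ i = n div p div p ^ i'" using Suc by (simp add: div_mult2_eq)
      thus ?thesis using 1(1)[OF _ 1(2) h2, of i'] False 1(2) by simp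
    qed
  qed
qed

lemma sm_mod:
  fixes p k x i :: nat
  assumes "i < k" "p > 0"
  shows "x mod p ^ k div p ^ i mod p = x div p ^ i mod p"
proof -
  have pk: "p ^ k = p ^ i * p ^ (k - i)" using assms by (metis le_add_diff_inverse less_imp_le power_add)
  have "x mod p ^ k = p ^ i * (x div p ^ i mod p ^ (k - i)) + x mod p ^ i"
    unfolding pk by (rule mod_mult2_eq)
  hence "x mod p ^ k div p ^ i = x div p ^ i mod p ^ (k - i)"
    using assms by simp
  moreover have "p dvd p ^ (k - i)" using assms by simp
  ultimately show ?thesis by (simp add: mod_mod_cancel)
qed

lemma sm_cong:
  fixes p k x y :: nat
  assumes "[x = y] (mod p ^ k)" "p > 0"
  shows "sm p k x = sm p k y"
  using assms sm_mod[of _ k p x] sm_mod[of _ k p y] unfolding sm_def cong_def by metis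

lemma sm_Suc: "sm p (Suc k) x \<longleftrightarrow> sm p k x \<and> 2 * (x div p ^ k mod p) < p"
  unfolding sm_def using less_Suc_eq by auto

lemma mod_Suc_split: fixes x p k :: nat shows "x mod p ^ Suc k = x mod p ^ k + p ^ k * (x div p ^ k mod p)"
  using mod_mult2_eq[of x "p ^ k" p] by (simp add: mult.commute)

lemma count_periodic:
  fixes D a :: nat
  assumes "D > 0" "\<And>s. P s = P (s mod D)"
  shows "card {s. s < a \<and> P s} \<le> (a div D + 1) * card {s. s < D \<and> P s}"
proof -
  let ?B = "{..a div D} \<times> {s. s < D \<and> P s}"
  have "card {s. s < a \<and> P s} \<le> card ?B"
  proof (rule card_inj_on_le[where f = "\<lambda>s. (s div D, s mod D)"])
    show "inj_on (\<lambda>s. (s div D, s mod D)) {s. s < a \<and> P s}"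
      by (intro inj_onI) (metis div_mod_decomp prod.inject)
    show "(\<lambda>s. (s div D, s mod D)) ` {s. s < a \<and> P s} \<subseteq> ?B"
      using assms by (auto intro: div_le_mono)
    show "finite ?B" by auto
  qed
  also have "card ?B = (a div D + 1) * card {s. s < D \<and> P s}"
    by (simp add: card_cartesian_product)
  finally show ?thesis .
qed



context
  fixes p \<alpha> :: nat
  assumes pp: "prime p" and a1: "\<alpha> > 1" and cop: "coprime p \<alpha>"
begin

lemma copk: "coprime (p ^ k) \<alpha>"
  using cop by simp

lemma ordpos: "ord (p ^ k) \<alpha> > 0"
  using copk by simp

lemma period: "[\<alpha> ^ s = \<alpha> ^ (s mod ord (p ^ k) \<alpha>)] (mod p ^ k)"
proof -
  let ?D = "ord (p ^ k) \<alpha>"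
  have "\<alpha> ^ s = \<alpha> ^ (?D * (s div ?D) + s mod ?D)" by simp
  hence e: "\<alpha> ^ s = (\<alpha> ^ ?D) ^ (s div ?D) * \<alpha> ^ (s mod ?D)"
    by (simp only: power_add power_mult)
  have "[(\<alpha> ^ ?D) ^ (s div ?D) * \<alpha> ^ (s mod ?D) = 1 ^ (s div ?D) * \<alpha> ^ (s mod ?D)] (mod p ^ k)"
    using ord_works[of \<alpha> "p ^ k"] by (intro cong_mult cong_pow cong_refl) auto
  thus ?thesis using e by simp
qed

lemma cancel:
  assumes "s \<le> t" "[\<alpha> ^ s = \<alpha> ^ t] (mod p ^ k)"
  shows "ord (p ^ k) \<alpha> dvd t - s"
proof -
  have "\<alpha> ^ t = \<alpha> ^ s * \<alpha> ^ (t - s)" using assms(1) by (simp flip: power_add)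
  hence "[\<alpha> ^ s * 1 = \<alpha> ^ s * \<alpha> ^ (t - s)] (mod p ^ k)" using assms(2) by simp
  moreover have "coprime (\<alpha> ^ s) (p ^ k)" using copk by (simp add: coprime_commute)
  ultimately have "[1 = \<alpha> ^ (t - s)] (mod p ^ k)" using cong_mult_lcancel_nat by blast
  thus ?thesis using ord_divides by (metis cong_sym)
qed

lemma D_dvd: "ord (p ^ k) \<alpha> dvd ord (p ^ Suc k) \<alpha>"
proof -
  have "[\<alpha> ^ ord (p ^ Suc k) \<alpha> = 1] (mod p ^ Suc k)" using ord_works by blast
  hence "[\<alpha> ^ ord (p ^ Suc k) \<alpha> = 1] (mod p ^ k)"
    by (rule cong_dvd_modulus_nat) (simp add: le_imp_power_dvd)
  thus ?thesis using ord_divides by blast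
qed

lemma D_dvd2:
  assumes "k \<ge> 1"
  shows "ord (p ^ Suc k) \<alpha> dvd p * ord (p ^ k) \<alpha>"
proof -
  have "[\<alpha> ^ ord (p ^ k) \<alpha> = 1] (mod p ^ k)" using ord_works by blast
  hence "[(\<alpha> ^ ord (p ^ k) \<alpha>) ^ p = 1] (mod p ^ Suc k)" using lift assms by blast
  hence "[\<alpha> ^ (p * ord (p ^ k) \<alpha>) = 1] (mod p ^ Suc k)"
    by (metis mult.commute power_mult)
  thus ?thesis using ord_divides by blast
qed

lemma D_cases:
  assumes "k \<ge> 1"
  shows "ord (p ^ Suc k) \<alpha> = ord (p ^ k) \<alpha> \<or> ord (p ^ Suc k) \<alpha> = p * ord (p ^ k) \<alpha>"
proof -
  obtain c where c: "ord (p ^ Suc k) \<alpha> = ord (p ^ k) \<alpha> * c" using D_dvd by blast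
  have "ord (p ^ k) \<alpha> * c dvd ord (p ^ k) \<alpha> * p" using D_dvd2[OF assms] c by (simp add: mult.commute)
  hence "c dvd p" using ordpos[of k] by simp
  hence "c = 1 \<or> c = p" using pp prime_nat_iff by blast
  thus ?thesis using c by auto
qed

lemma ord_bound:
  assumes "ord (p ^ k) \<alpha> \<le> a"
  shows "k < \<alpha> ^ a"
proof -
  let ?D = "ord (p ^ k) \<alpha>"
  have "[\<alpha> ^ ?D = 1] (mod p ^ k)" using ord_works by blast
  moreover have "\<alpha> ^ ?D \<ge> \<alpha>" using ordpos[of k] a1
    by (metis One_nat_def Suc_leI less_imp_le_nat power_increasing power_one_right)
  ultimately have "p ^ k dvd \<alpha> ^ ?D - 1" using a1 cong_altdef_nat by simp
  hence "p ^ k \<le> \<alpha> ^ ?D - 1" using a1 \<open>\<alpha> ^ ?D \<ge> \<alpha>\<close> by (intro dvd_imp_le) auto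
  also have "\<dots> < \<alpha> ^ ?D" using a1 by simp
  also have "\<dots> \<le> \<alpha> ^ a" using assms a1 by (intro power_increasing) auto
  finally have "p ^ k < \<alpha> ^ a" .
  moreover have "k < 2 ^ k" by simp
  moreover have "2 ^ k \<le> p ^ k" using prime_ge_2_nat[OF pp] by (simp add: power_mono)
  ultimately show ?thesis by linarith
qed


lemma tree_step:
  assumes Dp: "ord (p ^ Suc k) \<alpha> = p * ord (p ^ k) \<alpha>"
  shows "card {s. s < ord (p ^ Suc k) \<alpha> \<and> sm p (Suc k) (\<alpha> ^ s)}
           \<le> ((p + 1) div 2) * card {r. r < ord (p ^ k) \<alpha> \<and> sm p k (\<alpha> ^ r)}"
proof -
  define D where "D = ord (p ^ k) \<alpha>"
  define q where "q = (p + 1) div 2"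
  have Dpos: "D > 0" unfolding D_def using ordpos .
  have p0: "p > 0" using pp prime_gt_0_nat by blast
  define R where "R = {r. r < D \<and> sm p k (\<alpha> ^ r)}"
  define dg where "dg = (\<lambda>r i. \<alpha> ^ (r + i * D) div p ^ k mod p)"
  define I where "I = (\<lambda>r. {i. i < p \<and> 2 * dg r i < p})"
  have finR: "finite R" unfolding R_def by simp
  have perD: "[\<alpha> ^ (r + i * D) = \<alpha> ^ r] (mod p ^ k)" if "r < D" for r i
  proof -
    have "(r + i * D) mod D = r" using that by simp
    thus ?thesis using period[of "r + i * D" k] unfolding D_def by simp
  qed
  have cardI: "card (I r) \<le> q" if "r < D" for r
  proof -
    have "card (I r) \<le> card {..<q}"
    proof (rule card_inj_on_le[where f = "dg r"])
      show "dg r ` I r \<subseteq> {..<q}" unfolding I_def q_def by auto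
      show "finite {..<q}" by simp
      show "inj_on (dg r) (I r)"
      proof (rule inj_onI)
        fix i j assume i: "i \<in> I r" and j: "j \<in> I r" and ij: "dg r i = dg r j"
        have "[\<alpha> ^ (r + i * D) = \<alpha> ^ (r + j * D)] (mod p ^ k)"
          using perD[OF that, of i] perD[OF that, of j] by (metis cong_sym cong_trans)
        hence "\<alpha> ^ (r + i * D) mod p ^ Suc k = \<alpha> ^ (r + j * D) mod p ^ Suc k"
          using ij mod_Suc_split[of "\<alpha> ^ (r + i * D)" p k] mod_Suc_split[of "\<alpha> ^ (r + j * D)" p k]
          unfolding dg_def cong_def by simp
        hence c: "[\<alpha> ^ (r + i * D) = \<alpha> ^ (r + j * D)] (mod p ^ Suc k)" by (simp add: cong_def)
        have ilt: "i < p" and jlt: "j < p" using i j unfolding I_def by auto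
        have key: "\<And>i j. i \<le> j \<Longrightarrow> j < p \<Longrightarrow> [\<alpha> ^ (r + i * D) = \<alpha> ^ (r + j * D)] (mod p ^ Suc k) \<Longrightarrow> i = j"
        proof -
          fix i j assume le: "i \<le> j" and jp: "j < p" and cc: "[\<alpha> ^ (r + i * D) = \<alpha> ^ (r + j * D)] (mod p ^ Suc k)"
          have "ord (p ^ Suc k) \<alpha> dvd (r + j * D) - (r + i * D)"
            using cancel[OF _ cc] le by (simp add: mult_le_mono1)
          hence "p * D dvd (j - i) * D" using Dp unfolding D_def by (simp add: diff_mult_distrib)
          hence "p dvd j - i" using Dpos by simp
          moreover have "j - i < p" using jp by simp
          ultimately have "j - i = 0" using dvd_imp_le by (metis gr0I leD)
          thus "i = j" using le by simp
        qed
        show "i = j"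
        proof (cases "i \<le> j")
          case True show ?thesis using key[OF True jlt c] .
        next
          case False thus ?thesis using key[of j i] ilt c cong_sym by fastforce
        qed
      qed
    qed
    thus ?thesis by simp
  qed
  have sub: "{s. s < ord (p ^ Suc k) \<alpha> \<and> sm p (Suc k) (\<alpha> ^ s)} \<subseteq> (\<lambda>(r, i). r + i * D) ` Sigma R I"
  proof
    fix s assume "s \<in> {s. s < ord (p ^ Suc k) \<alpha> \<and> sm p (Suc k) (\<alpha> ^ s)}"
    hence s: "s < p * D" "sm p (Suc k) (\<alpha> ^ s)" using Dp unfolding D_def by auto
    define r where "r = s mod D"
    define i where "i = s div D"
    have sri: "s = r + i * D" unfolding r_def i_def by simp
    have rD: "r < D" unfolding r_def using Dpos by simp
    have ip: "i < p" unfolding i_def using s(1) Dpos by (simp add: div_less_iff_less_mult)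
    have "sm p k (\<alpha> ^ s)" using s(2) sm_Suc by blast
    moreover have "[\<alpha> ^ s = \<alpha> ^ r] (mod p ^ k)" using perD[OF rD, of i] sri by simp
    ultimately have "sm p k (\<alpha> ^ r)" using sm_cong p0 by blast
    hence "r \<in> R" using rD unfolding R_def by simp
    moreover have "i \<in> I r" using ip s(2) sri sm_Suc unfolding I_def dg_def by auto
    ultimately show "s \<in> (\<lambda>(r, i). r + i * D) ` Sigma R I" using sri by force
  qed
  have "card {s. s < ord (p ^ Suc k) \<alpha> \<and> sm p (Suc k) (\<alpha> ^ s)} \<le> card ((\<lambda>(r, i). r + i * D) ` Sigma R I)"
    by (rule card_mono[OF _ sub]) (simp add: finR I_def)
  also have "\<dots> \<le> card (Sigma R I)" by (rule card_image_le) (simp add: finR I_def)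
  also have "\<dots> = (\<Sum>r\<in>R. card (I r))" using finR by (simp add: I_def)
  also have "\<dots> \<le> (\<Sum>r\<in>R. q)" using cardI unfolding R_def by (intro sum_mono) auto
  also have "\<dots> = q * card R" by simp
  finally show ?thesis unfolding q_def R_def D_def .
qed

lemma main_ind:
  assumes "k \<ge> 1"
  shows "\<exists>j. ord (p ^ k) \<alpha> = ord p \<alpha> * p ^ j \<and>
     card {s. s < ord (p ^ k) \<alpha> \<and> sm p k (\<alpha> ^ s)} \<le> ord p \<alpha> * ((p + 1) div 2) ^ j"
  using assms
proof (induction k rule: dec_induct)
  case base
  have "card {s. s < ord (p ^ 1) \<alpha> \<and> sm p 1 (\<alpha> ^ s)} \<le> card {..<ord p \<alpha>}"
    by (intro card_mono) auto
  thus ?case by (intro exI[of _ 0]) simp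
next
  case (step n)
  then obtain j where j: "ord (p ^ n) \<alpha> = ord p \<alpha> * p ^ j"
     "card {s. s < ord (p ^ n) \<alpha> \<and> sm p n (\<alpha> ^ s)} \<le> ord p \<alpha> * ((p + 1) div 2) ^ j" by blast
  from D_cases[OF step(1)] show ?case
  proof
    assume eq: "ord (p ^ Suc n) \<alpha> = ord (p ^ n) \<alpha>"
    have "card {s. s < ord (p ^ Suc n) \<alpha> \<and> sm p (Suc n) (\<alpha> ^ s)} \<le> card {s. s < ord (p ^ n) \<alpha> \<and> sm p n (\<alpha> ^ s)}"
      unfolding eq by (intro card_mono) (auto simp: sm_Suc)
    thus ?case using j eq by (intro exI[of _ j]) simp
  next
    assume eq: "ord (p ^ Suc n) \<alpha> = p * ord (p ^ n) \<alpha>"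
    have "card {s. s < ord (p ^ Suc n) \<alpha> \<and> sm p (Suc n) (\<alpha> ^ s)} \<le> ((p + 1) div 2) * card {s. s < ord (p ^ n) \<alpha> \<and> sm p n (\<alpha> ^ s)}"
      using tree_step[OF eq] .
    also have "\<dots> \<le> ((p + 1) div 2) * (ord p \<alpha> * ((p + 1) div 2) ^ j)"
      using j(2) by (intro mult_le_mono2)
    finally show ?case using j eq by (intro exI[of _ "Suc j"]) (simp add: ac_simps)
  qed
qed

end



theorem theorem2p7:
  fixes p alpha a :: nat
  assumes "prime p" and "odd p" and "alpha > 1" and "coprime p alpha" and "a \<ge> 1"
  shows "real (S alpha p 1 a) \<le> 4 * real a powr (log p ((real p + 1) / 2))"
proof -
  note pp = assms(1) and a1 = assms(3) and cop = assms(4)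
  have p2: "p \<ge> 2" using prime_ge_2_nat[OF pp] .
  have p3: "p \<ge> 3" using p2 assms(2) by presburger
  define e where "e = ord p alpha"
  define th where "th = log p ((real p + 1) / 2)"
  define q where "q = (p + 1) div 2"
  have rq: "real q = (real p + 1) / 2"
  proof -
    have "q * 2 = p + 1" unfolding q_def using assms(2) by presburger
    hence "real q * 2 = real p + 1" by (metis of_nat_1 of_nat_add of_nat_mult of_nat_numeral)
    thus ?thesis by simp
  qed
  have epos: "e > 0" unfolding e_def using ordpos[OF pp a1 cop, of 1] by simp
  have ndvd: "\<not> p dvd alpha" using pp cop by (metis coprime_absorb_left not_prime_unit)
  have "[alpha ^ (p - 1) = 1] (mod p)" using fermat_theorem[OF pp ndvd] .
  hence "e dvd p - 1" unfolding e_def using ord_divides by blast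
  hence ep: "e \<le> p - 1" using p2 by (intro dvd_imp_le) auto
  have chord': "t + 1 \<le> 2 * t powr th" if "1 \<le> t" "t \<le> real p" for t
    unfolding th_def using chord[of "real p" t] that p3 by simp
  have Sle: "S alpha p 1 a \<le> card {s. s < a \<and> sm p k (alpha ^ s)}" for k
    unfolding S_def
    by (intro card_mono) (auto simp: sm_def intro: digits_small[OF p2])
  show ?thesis
  proof (cases "a < e")
    case True
    have "S alpha p 1 a \<le> card {..<a}" unfolding S_def by (intro card_mono) auto
    hence "real (S alpha p 1 a) \<le> real a" by simp
    also have "real a \<le> 2 * real a powr th"
    proof -
      have "a \<le> p" using True ep by linarith
      thus ?thesis using chord'[of "real a"] assms(5) by simp
    qed
    also have "\<dots> \<le> 4 * real a powr th" by simp
    finally show ?thesis unfolding th_def .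
  next
    case False
    define K where "K = {k. 1 \<le> k \<and> ord (p ^ k) alpha \<le> a}"
    have finK: "finite K"
      by (rule finite_subset[of _ "{..<alpha ^ a}"]) (auto simp: K_def intro: ord_bound[OF pp a1 cop])
    have "1 \<in> K" unfolding K_def e_def using False e_def by simp
    define k0 where "k0 = Max K"
    have k0K: "k0 \<in> K" unfolding k0_def using finK \<open>1 \<in> K\<close> by (intro Max_in) auto
    hence k01: "k0 \<ge> 1" and D0a: "ord (p ^ k0) alpha \<le> a" unfolding K_def by auto
    have "Suc k0 \<notin> K" using Max_ge[OF finK] unfolding k0_def by fastforce
    hence Da: "ord (p ^ Suc k0) alpha > a" using k01 unfolding K_def by auto
    define D0 where "D0 = ord (p ^ k0) alpha"
    have D0pos: "D0 > 0" unfolding D0_def using ordpos[OF pp a1 cop] .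
    have aD: "a < p * D0" using D_cases[OF pp a1 cop k01] Da D0a unfolding D0_def by auto
    obtain j where j: "D0 = e * p ^ j"
      "card {s. s < D0 \<and> sm p k0 (alpha ^ s)} \<le> e * q ^ j"
      using main_ind[OF pp a1 cop k01] unfolding D0_def e_def q_def by blast
    have per: "sm p k0 (alpha ^ s) = sm p k0 (alpha ^ (s mod D0))" for s
      unfolding D0_def using sm_cong[OF period[OF pp a1 cop, of s k0]] p2 by simp
    have "S alpha p 1 a \<le> (a div D0 + 1) * card {s. s < D0 \<and> sm p k0 (alpha ^ s)}"
      using Sle[of k0] count_periodic[of D0 "\<lambda>s. sm p k0 (alpha ^ s)" a, OF D0pos per] by linarith
    also have "\<dots> \<le> (a div D0 + 1) * (e * q ^ j)" using j(2) by (intro mult_le_mono2)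
    finally have "real (S alpha p 1 a) \<le> real ((a div D0 + 1) * (e * q ^ j))" by linarith
    also have "\<dots> = (real (a div D0) + 1) * (real e * real q ^ j)" by (simp add: algebra_simps)
    also have "\<dots> \<le> (real a / real D0 + 1) * (real e * real q ^ j)"
      by (intro mult_right_mono add_right_mono of_nat_div_le_of_nat) auto
    finally have S1: "real (S alpha p 1 a) \<le> (real a / real D0 + 1) * (real e * real q ^ j)" .
    define y where "y = real a / real D0"
    have y1: "1 \<le> y" unfolding y_def using D0a D0pos unfolding D0_def[symmetric] by simp
    have yp: "y \<le> real p" unfolding y_def using aD D0pos
      by (simp add: divide_le_eq) (metis of_nat_less_iff of_nat_mult less_imp_le mult.commute)
    have cy: "y + 1 \<le> 2 * y powr th" using chord'[OF y1 yp] .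
    have ce: "real e \<le> 2 * real e powr th"
    proof -
      have "e \<le> p" using ep by linarith
      thus ?thesis using chord'[of "real e"] epos by simp
    qed
    have pth: "real p powr th = real q" unfolding th_def rq using p3 by simp
    have pj: "(real p ^ j) powr th = real q ^ j"
    proof -
      have "(real p ^ j) powr th = (real p powr real j) powr th" using p3 by (simp add: powr_realpow)
      also have "\<dots> = real p powr (real j * th)" by (simp add: powr_powr)
      also have "\<dots> = (real p powr th) ^ j" using p3 by (simp add: powr_power)
      finally show ?thesis using pth by simp
    qed
    have areal: "real a = y * (real e * real p ^ j)"
      unfolding y_def using D0pos j(1) by (simp add: field_simps)
    have apow: "real a powr th = y powr th * (real e powr th * real q ^ j)"
      unfolding areal powr_mult pj ..
    have "(y + 1) * (real e * real q ^ j) \<le> (2 * y powr th) * ((2 * real e powr th) * real q ^ j)"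
      using cy ce by (intro mult_mono mult_right_mono) auto
    also have "\<dots> = 4 * real a powr th" unfolding apow by simp
    finally show ?thesis using S1 unfolding y_def th_def by linarith
  qed
qed

end
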